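(* Let $\vec E$ be as in the context, fix $b\in\Lambda^*$, and for $J_\Lambda,J'_\Lambda\in\mathbb{R}^{\Lambda^*}$ consider the curve $J_\Lambda(s)=e^{-s}J_\Lambda+\sqrt{1-e^{-2s}}J'_\Lambda$, $s\ge0$. Then for all $0\le t\le1$, $$\big|F_b(t)-F_b(0)\big|\le 6\sqrt t\cdot\max_{e\in\Lambda^*}\big(|J_e|\vee|J'_e|\big)\cdot\max_{s\le t}|\partial\mathcal D_b(s)|.$$
   Context: $\Lambda\subset\mathbb{Z}^d$ is a finite box, $\Lambda^*$ its set of nearest-neighbour edges. For spins $\eta$ and $e=\{x,y\}$, $\eta_e=\eta_x\eta_y$; $\mathcal S_\Lambda\subset\{-1,1\}^{\Lambda^*}$ is the set of edge configurations induced by spin configurations on $\Lambda$. $H_{\Lambda,J}(\eta)=-\sum_{e\in\Lambda^*}J_e\eta_e$. $\vec E=(E(\eta,\eta'))_{\eta,\eta'\in\mathcal S_\Lambda}$ is a family of reals with $E(\eta,\eta)=0$ and $E(\eta,\eta'')=E(\eta,\eta')+E(\eta',\eta'')$. Critical set $\mathcal C=\bigcup_{\eta\ne\eta'}\{J_\Lambda:\sum_eJ_e(\eta_e-\eta'_e)=E(\eta,\eta')\}$. For $J_\Lambda\notin\mathcal C$, $\eta\prec\eta'$ iff $E(\eta,\eta')+H_{\Lambda,J}(\eta)-H_{\Lambda,J}(\eta')<0$ (a strict total order); $\sigma^{\pm,b}(J_\Lambda)$ is the $\prec$-minimal element among $\eta$ with $\eta_b=\pm1$; $\partial\mathcal D_b(J_\Lambda)=\{e\in\Lambda^*:\sigma^{+,b}_e(J_\Lambda)\ne\sigma^{-,b}_e(J_\Lambda)\}$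 (the boundary of the critical droplet of $b$). The flexibility $F_b(J_\Lambda)=\big|-\sum_{e}J_e(\sigma^{+,b}_e(J_\Lambda)-\sigma^{-,b}_e(J_\Lambda))+E(\sigma^{+,b}(J_\Lambda),\sigma^{-,b}(J_\Lambda))\big|$ on $\mathbb{R}^{\Lambda^*}\setminus\mathcal C$ extends uniquely to a continuous function on $\mathbb{R}^{\Lambda^*}$, still denoted $F_b$. Write $F_b(s)=F_b(J_\Lambda(s))$ and $\partial\mathcal D_b(s)=\partial\mathcal D_b(J_\Lambda(s))$ (defined for $J_\Lambda(s)\notin\mathcal C$). $a\vee b=\max(a,b)$. *)

theory Defs
  imports "HOL-Analysis.Analysis"
begin

definition box :: "int ^ 'd \<Rightarrow> int ^ 'd \<Rightarrow> (int ^ 'd) set" where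
  "box a b = {x. \<forall>i. a $ i \<le> x $ i \<and> x $ i \<le> b $ i}"

definition nn_edges :: "(int ^ 'd) set \<Rightarrow> (int ^ 'd) set set" where
  "nn_edges V = {{x, y} | x y. x \<in> V \<and> y \<in> V \<and> (\<Sum>i\<in>UNIV. \<bar>x $ i - y $ i\<bar>) = 1}"

definition edge_cfg :: "'v set set \<Rightarrow> ('v \<Rightarrow> real) \<Rightarrow> ('v set \<Rightarrow> real)" where
  "edge_cfg L eta = (\<lambda>e. if e \<in> L then (\<Prod>x\<in>e. eta x) else 0)"

definition configs :: "'v set \<Rightarrow> 'v set set \<Rightarrow> ('v set \<Rightarrow> real) set" where
  "configs V L = {edge_cfg L eta | eta. \<forall>x\<in>V. eta x = 1 \<or> eta x = -1}"

definition ham :: "'v set set \<Rightarrow> ('v set \<Rightarrow> real) \<Rightarrow> ('v set \<Rightarrow> real) \<Rightarrow> real" where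
  "ham L J eta = - (\<Sum>e\<in>L. J e * eta e)"

definition crit :: "('v set \<Rightarrow> real) set \<Rightarrow> 'v set set
    \<Rightarrow> (('v set \<Rightarrow> real) \<Rightarrow> ('v set \<Rightarrow> real) \<Rightarrow> real) \<Rightarrow> ('v set \<Rightarrow> real) set" where
  "crit S L E = {J. \<exists>eta\<in>S. \<exists>eta'\<in>S. eta \<noteq> eta' \<and> (\<Sum>e\<in>L. J e * (eta e - eta' e)) = E eta eta'}"

definition prec :: "'v set set \<Rightarrow> (('v set \<Rightarrow> real) \<Rightarrow> ('v set \<Rightarrow> real) \<Rightarrow> real)
    \<Rightarrow> ('v set \<Rightarrow> real) \<Rightarrow> ('v set \<Rightarrow> real) \<Rightarrow> ('v set \<Rightarrow> real) \<Rightarrow> bool" where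
  "prec L E J eta eta' \<longleftrightarrow> E eta eta' + ham L J eta - ham L J eta' < 0"

definition sigma :: "('v set \<Rightarrow> real) set \<Rightarrow> 'v set set
    \<Rightarrow> (('v set \<Rightarrow> real) \<Rightarrow> ('v set \<Rightarrow> real) \<Rightarrow> real)
    \<Rightarrow> ('v set \<Rightarrow> real) \<Rightarrow> 'v set \<Rightarrow> real \<Rightarrow> ('v set \<Rightarrow> real)" where
  "sigma S L E J b s = (THE eta. eta \<in> S \<and> eta b = s \<and>
      (\<forall>eta'\<in>S. eta' b = s \<and> eta' \<noteq> eta \<longrightarrow> prec L E J eta eta'))"

text \<open>Boundary of the critical droplet of b (meaningful for J outside the critical set).\<close>
definition droplet_bd :: "('v set \<Rightarrow> real) set \<Rightarrow> 'v set set
    \<Rightarrow> (('v set \<Rightarrow> real) \<Rightarrow> ('v set \<Rightarrow> real) \<Rightarrow> real)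
    \<Rightarrow> ('v set \<Rightarrow> real) \<Rightarrow> 'v set \<Rightarrow> 'v set set" where
  "droplet_bd S L E J b = {e \<in> L. sigma S L E J b 1 e \<noteq> sigma S L E J b (-1) e}"

definition flex0 :: "('v set \<Rightarrow> real) set \<Rightarrow> 'v set set
    \<Rightarrow> (('v set \<Rightarrow> real) \<Rightarrow> ('v set \<Rightarrow> real) \<Rightarrow> real)
    \<Rightarrow> ('v set \<Rightarrow> real) \<Rightarrow> 'v set \<Rightarrow> real" where
  "flex0 S L E J b = \<bar>- (\<Sum>e\<in>L. J e * (sigma S L E J b 1 e - sigma S L E J b (-1) e))
                      + E (sigma S L E J b 1) (sigma S L E J b (-1))\<bar>"

definition cont_R :: "'v set set \<Rightarrow> (('v set \<Rightarrow> real) \<Rightarrow> real) \<Rightarrow> bool" where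
  "cont_R L F \<longleftrightarrow> (\<forall>J. \<forall>\<epsilon>>0. \<exists>\<delta>>0. \<forall>J'. (\<forall>e\<in>L. \<bar>J' e - J e\<bar> < \<delta>) \<longrightarrow> \<bar>F J' - F J\<bar> < \<epsilon>)"

definition flex :: "('v set \<Rightarrow> real) set \<Rightarrow> 'v set set
    \<Rightarrow> (('v set \<Rightarrow> real) \<Rightarrow> ('v set \<Rightarrow> real) \<Rightarrow> real)
    \<Rightarrow> 'v set \<Rightarrow> ('v set \<Rightarrow> real) \<Rightarrow> real" where
  "flex S L E b = (THE F. cont_R L F \<and> (\<forall>J. J \<notin> crit S L E \<longrightarrow> F J = flex0 S L E J b))"

definition curve :: "('v set \<Rightarrow> real) \<Rightarrow> ('v set \<Rightarrow> real) \<Rightarrow> real \<Rightarrow> ('v set \<Rightarrow> real)" where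
  "curve J J' s = (\<lambda>e. exp (- s) * J e + sqrt (1 - exp (- 2 * s)) * J' e)"

end

theory Submission imports Defs "HOL-Computational_Algebra.Polynomial" begin

locale setting =
  fixes S :: "('v set \<Rightarrow> real) set" and L :: "'v set set"
    and E :: "('v set \<Rightarrow> real) \<Rightarrow> ('v set \<Rightarrow> real) \<Rightarrow> real" and b :: "'v set"
  assumes finL: "finite L" and finS: "finite S"
    and zero_off: "\<And>\<eta> e. \<eta> \<in> S \<Longrightarrow> e \<notin> L \<Longrightarrow> \<eta> e = 0"
    and pm: "\<And>\<eta> e. \<eta> \<in> S \<Longrightarrow> e \<in> L \<Longrightarrow> \<eta> e = 1 \<or> \<eta> e = -1"
    and Erefl: "\<forall>eta\<in>S. E eta eta = 0"
    and Ecoc: "\<forall>eta\<in>S. \<forall>eta'\<in>S. \<forall>eta''\<in>S. E eta eta'' = E eta eta' + E eta' eta''"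
    and exP: "\<exists>\<eta>\<in>S. \<eta> b = 1" and exM: "\<exists>\<eta>\<in>S. \<eta> b = -1"
begin

definition eta0 where "eta0 = (SOME \<eta>. \<eta> \<in> S)"

lemma eta0_in: "eta0 \<in> S"
  unfolding eta0_def using exP someI[of "\<lambda>\<eta>. \<eta> \<in> S"] by blast

definition V where "V J \<eta> = E \<eta> eta0 - (\<Sum>e\<in>L. J e * \<eta> e)"
definition Sc where "Sc s = {\<eta>\<in>S. \<eta> b = s}"
definition m where "m s J = Min (V J ` Sc s)"
definition G where "G J = \<bar>m 1 J - m (-1) J\<bar>"

lemma V_diff:
  assumes "\<eta> \<in> S" "\<eta>' \<in> S"
  shows "V J \<eta> - V J \<eta>' = E \<eta> \<eta>' - (\<Sum>e\<in>L. J e * (\<eta> e - \<eta>' e))"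
proof -
  have "E \<eta> eta0 = E \<eta> \<eta>' + E \<eta>' eta0" using Ecoc assms eta0_in by blast
  then show ?thesis unfolding V_def by (simp add: right_diff_distrib sum_subtractf)
qed

lemma prec_iff:
  assumes "\<eta> \<in> S" "\<eta>' \<in> S"
  shows "prec L E J \<eta> \<eta>' \<longleftrightarrow> V J \<eta> < V J \<eta>'"
proof -
  have d: "V J \<eta> - V J \<eta>' = E \<eta> \<eta>' - (\<Sum>e\<in>L. J e * \<eta> e) + (\<Sum>e\<in>L. J e * \<eta>' e)"
    using V_diff[OF assms, of J] by (simp add: right_diff_distrib sum_subtractf)
  have "E \<eta> \<eta>' + ham L J \<eta> - ham L J \<eta>' = V J \<eta> - V J \<eta>'"
    unfolding ham_def using d by simp
  then show ?thesis unfolding prec_def by simp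
qed

lemma crit_iff:
  "J \<in> crit S L E \<longleftrightarrow> (\<exists>\<eta>\<in>S. \<exists>\<eta>'\<in>S. \<eta> \<noteq> \<eta>' \<and> V J \<eta> = V J \<eta>')"
proof -
  have eq: "((\<Sum>e\<in>L. J e * (\<eta> e - \<eta>' e)) = E \<eta> \<eta>') = (V J \<eta> = V J \<eta>')"
    if "\<eta> \<in> S" "\<eta>' \<in> S" for \<eta> \<eta>'
  proof -
    have h: "V J \<eta> - V J \<eta>' = E \<eta> \<eta>' - (\<Sum>e\<in>L. J e * (\<eta> e - \<eta>' e))"
      by (rule V_diff[OF that])
    show ?thesis
    proof
      assume "(\<Sum>e\<in>L. J e * (\<eta> e - \<eta>' e)) = E \<eta> \<eta>'"
      then show "V J \<eta> = V J \<eta>'" using h by simp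
    next
      assume "V J \<eta> = V J \<eta>'"
      then show "(\<Sum>e\<in>L. J e * (\<eta> e - \<eta>' e)) = E \<eta> \<eta>'" using h by simp
    qed
  qed
  show ?thesis
  proof
    assume "J \<in> crit S L E"
    then obtain \<eta> \<eta>' where c: "\<eta> \<in> S" "\<eta>' \<in> S" "\<eta> \<noteq> \<eta>'"
      "(\<Sum>e\<in>L. J e * (\<eta> e - \<eta>' e)) = E \<eta> \<eta>'" unfolding crit_def by blast
    then have "V J \<eta> = V J \<eta>'" using eq by blast
    then show "\<exists>\<eta>\<in>S. \<exists>\<eta>'\<in>S. \<eta> \<noteq> \<eta>' \<and> V J \<eta> = V J \<eta>'" using c by blast
  next
    assume "\<exists>\<eta>\<in>S. \<exists>\<eta>'\<in>S. \<eta> \<noteq> \<eta>' \<and> V J \<eta> = V J \<eta>'"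
    then obtain \<eta> \<eta>' where c: "\<eta> \<in> S" "\<eta>' \<in> S" "\<eta> \<noteq> \<eta>'" "V J \<eta> = V J \<eta>'" by blast
    then have "(\<Sum>e\<in>L. J e * (\<eta> e - \<eta>' e)) = E \<eta> \<eta>'" using eq by blast
    then show "J \<in> crit S L E" unfolding crit_def using c by blast
  qed
qed

lemma finSc: "finite (Sc s)" unfolding Sc_def using finS by simp

lemma Sc_ne: "s = 1 \<or> s = -1 \<Longrightarrow> Sc s \<noteq> {}"
  unfolding Sc_def using exP exM by auto

lemma sigma_char:
  assumes "J \<notin> crit S L E" "s = 1 \<or> s = -1"
  shows "sigma S L E J b s \<in> Sc s \<and> V J (sigma S L E J b s) = m s J
     \<and> (\<forall>\<eta>\<in>Sc s. \<eta> \<noteq> sigma S L E J b s \<longrightarrow> V J (sigma S L E J b s) < V J \<eta>)"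
proof -
  have inj: "\<And>\<eta> \<eta>'. \<eta> \<in> S \<Longrightarrow> \<eta>' \<in> S \<Longrightarrow> \<eta> \<noteq> \<eta>' \<Longrightarrow> V J \<eta> \<noteq> V J \<eta>'"
    using assms(1) crit_iff by blast
  have "Min (V J ` Sc s) \<in> V J ` Sc s" using Min_in[of "V J ` Sc s"] finSc Sc_ne[OF assms(2)] by blast
  then obtain \<sigma> where \<sigma>: "\<sigma> \<in> Sc s" "V J \<sigma> = m s J"
    unfolding m_def by auto
  have lt: "\<forall>\<eta>\<in>Sc s. \<eta> \<noteq> \<sigma> \<longrightarrow> V J \<sigma> < V J \<eta>"
  proof (intro ballI impI)
    fix \<eta> assume h: "\<eta> \<in> Sc s" "\<eta> \<noteq> \<sigma>"
    have "V J \<sigma> \<le> V J \<eta>" using \<sigma>(2) h(1) finSc unfolding m_def by simp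
    moreover have "V J \<sigma> \<noteq> V J \<eta>" using inj h \<sigma>(1) unfolding Sc_def by auto
    ultimately show "V J \<sigma> < V J \<eta>" by simp
  qed
  have "sigma S L E J b s = \<sigma>"
    unfolding sigma_def
  proof (rule the_equality)
    show "\<sigma> \<in> S \<and> \<sigma> b = s \<and> (\<forall>eta'\<in>S. eta' b = s \<and> eta' \<noteq> \<sigma> \<longrightarrow> prec L E J \<sigma> eta')"
      using \<sigma>(1) lt prec_iff unfolding Sc_def by auto
  next
    fix x assume h: "x \<in> S \<and> x b = s \<and> (\<forall>eta'\<in>S. eta' b = s \<and> eta' \<noteq> x \<longrightarrow> prec L E J x eta')"
    show "x = \<sigma>"
    proof (rule ccontr)
      assume ne: "x \<noteq> \<sigma>"
      have "V J x < V J \<sigma>" using h ne \<sigma>(1) prec_iff unfolding Sc_def by auto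
      moreover have "V J \<sigma> < V J x" using lt h ne unfolding Sc_def by auto
      ultimately show False by simp
    qed
  qed
  then show ?thesis using \<sigma> lt by simp
qed

lemma flex0_eq:
  assumes "J \<notin> crit S L E"
  shows "flex0 S L E J b = G J"
proof -
  let ?p = "sigma S L E J b 1" and ?q = "sigma S L E J b (-1)"
  have p: "?p \<in> S" "V J ?p = m 1 J" using sigma_char[OF assms, of 1] unfolding Sc_def by auto
  have q: "?q \<in> S" "V J ?q = m (-1) J" using sigma_char[OF assms, of "-1"] unfolding Sc_def by auto
  show ?thesis unfolding flex0_def G_def using V_diff[OF p(1) q(1), of J] p q by simp
qed

lemma V_lip:
  assumes "\<eta> \<in> S"
  shows "\<bar>V J \<eta> - V J' \<eta>\<bar> \<le> (\<Sum>e\<in>L. \<bar>J e - J' e\<bar>)"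
proof -
  have "V J \<eta> - V J' \<eta> = (\<Sum>e\<in>L. (J' e - J e) * \<eta> e)"
    unfolding V_def by (simp add: left_diff_distrib sum_subtractf)
  also have "\<bar>\<dots>\<bar> \<le> (\<Sum>e\<in>L. \<bar>(J' e - J e) * \<eta> e\<bar>)" by (rule sum_abs)
  also have "\<dots> \<le> (\<Sum>e\<in>L. \<bar>J e - J' e\<bar>)"
  proof (rule sum_mono)
    fix e assume "e \<in> L"
    then have "\<bar>\<eta> e\<bar> = 1" using pm[OF assms, of e] by auto
    then show "\<bar>(J' e - J e) * \<eta> e\<bar> \<le> \<bar>J e - J' e\<bar>" by (simp add: abs_mult)
  qed
  finally show ?thesis .
qed

lemma Min_lip:
  fixes f g :: "'a \<Rightarrow> real"
  assumes "finite X" "X \<noteq> {}" "\<And>x. x \<in> X \<Longrightarrow> \<bar>f x - g x\<bar> \<le> c"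
  shows "\<bar>Min (f ` X) - Min (g ` X)\<bar> \<le> c"
proof -
  have "Min (f ` X) \<in> f ` X" using Min_in[of "f ` X"] assms by blast
  then obtain x1 where x1: "x1 \<in> X" "Min (f ` X) = f x1" by auto
  have "Min (g ` X) \<in> g ` X" using Min_in[of "g ` X"] assms by blast
  then obtain x2 where x2: "x2 \<in> X" "Min (g ` X) = g x2" by auto
  have "f x1 \<le> f x2" using x1(2) Min_le[of "f ` X" "f x2"] assms(1) x2(1) by simp
  moreover have "g x2 \<le> g x1" using x2(2) Min_le[of "g ` X" "g x1"] assms(1) x1(1) by simp
  moreover have "\<bar>f x1 - g x1\<bar> \<le> c" "\<bar>f x2 - g x2\<bar> \<le> c" using assms x1 x2 by auto
  ultimately show ?thesis using x1 x2 by linarith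
qed

lemma m_lip:
  assumes "s = 1 \<or> s = -1"
  shows "\<bar>m s J - m s J'\<bar> \<le> (\<Sum>e\<in>L. \<bar>J e - J' e\<bar>)"
  unfolding m_def
  by (rule Min_lip[OF finSc Sc_ne[OF assms]]) (use V_lip in \<open>auto simp: Sc_def\<close>)

lemma G_lip: "\<bar>G J - G J'\<bar> \<le> 2 * (\<Sum>e\<in>L. \<bar>J e - J' e\<bar>)"
  using m_lip[of 1 J J'] m_lip[of "-1" J J'] unfolding G_def by linarith

lemma G_cont: "cont_R L G"
  unfolding cont_R_def
proof (intro allI impI)
  fix J :: "'v set \<Rightarrow> real" and \<epsilon> :: real assume "\<epsilon> > 0"
  define \<delta> where "\<delta> = \<epsilon> / (2 * real (card L) + 1)"
  have dpos: "\<delta> > 0" using \<open>\<epsilon> > 0\<close> unfolding \<delta>_def by simp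
  have key: "2 * real (card L) * \<delta> < \<epsilon>"
    using \<open>\<epsilon> > 0\<close> unfolding \<delta>_def by (simp add: field_simps)
  show "\<exists>\<delta>>0. \<forall>J'. (\<forall>e\<in>L. \<bar>J' e - J e\<bar> < \<delta>) \<longrightarrow> \<bar>G J' - G J\<bar> < \<epsilon>"
  proof (intro exI[of _ \<delta>] conjI allI impI dpos)
    fix J' assume h: "\<forall>e\<in>L. \<bar>J' e - J e\<bar> < \<delta>"
    have "(\<Sum>e\<in>L. \<bar>J' e - J e\<bar>) \<le> real (card L) * \<delta>"
      using sum_bounded_above[of L "\<lambda>e. \<bar>J' e - J e\<bar>" \<delta>] h by fastforce
    then show "\<bar>G J' - G J\<bar> < \<epsilon>" using G_lip[of J' J] key by linarith
  qed
qed

lemma dense: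
  assumes "\<delta> > 0"
  shows "\<exists>J'. (\<forall>e\<in>L. \<bar>J' e - J e\<bar> < \<delta>) \<and> J' \<notin> crit S L E"
proof -
  obtain h where h: "bij_betw h L {0..<card L}" using ex_bij_betw_finite_nat[OF finL] by blast
  define k where "k e = Suc (h e)" for e
  have kinj: "inj_on k L" using h unfolding k_def bij_betw_def inj_on_def by auto
  define p where "p \<eta> \<eta>' = [:(\<Sum>e\<in>L. J e * (\<eta> e - \<eta>' e)) - E \<eta> \<eta>':]
      + (\<Sum>e\<in>L. monom (\<eta> e - \<eta>' e) (k e))" for \<eta> \<eta>'
  have peval: "poly (p \<eta> \<eta>') x = (\<Sum>e\<in>L. (J e + x ^ k e) * (\<eta> e - \<eta>' e)) - E \<eta> \<eta>'" for \<eta> \<eta>' x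
  proof -
    have "poly (p \<eta> \<eta>') x = ((\<Sum>e\<in>L. J e * (\<eta> e - \<eta>' e)) - E \<eta> \<eta>')
       + (\<Sum>e\<in>L. (\<eta> e - \<eta>' e) * x ^ k e)"
      unfolding p_def by (simp add: poly_sum poly_monom)
    also have "(\<Sum>e\<in>L. (\<eta> e - \<eta>' e) * x ^ k e) = (\<Sum>e\<in>L. x ^ k e * (\<eta> e - \<eta>' e))"
      by (simp add: mult.commute)
    also have "(\<Sum>e\<in>L. (J e + x ^ k e) * (\<eta> e - \<eta>' e)) = (\<Sum>e\<in>L. J e * (\<eta> e - \<eta>' e))
       + (\<Sum>e\<in>L. x ^ k e * (\<eta> e - \<eta>' e))"
      by (simp add: distrib_right sum.distrib)
    ultimately show ?thesis by simp
  qed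
  have pne: "p \<eta> \<eta>' \<noteq> 0" if hh: "\<eta> \<in> S" "\<eta>' \<in> S" "\<eta> \<noteq> \<eta>'" for \<eta> \<eta>'
  proof
    assume p0: "p \<eta> \<eta>' = 0"
    obtain e0 where e0: "\<eta> e0 \<noteq> \<eta>' e0" using hh(3) by auto
    have e0L: "e0 \<in> L" by (metis e0 hh(1) hh(2) zero_off)
    have "coeff (p \<eta> \<eta>') (k e0) = (\<Sum>e\<in>L. if k e = k e0 then \<eta> e - \<eta>' e else 0)"
      unfolding p_def k_def by (simp add: coeff_sum coeff_monom)
    also have "\<dots> = (\<Sum>e\<in>L. if e = e0 then \<eta> e - \<eta>' e else 0)"
      using kinj e0L by (intro sum.cong) (auto simp: inj_on_def)
    also have "\<dots> = \<eta> e0 - \<eta>' e0" using e0L finL by simp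
    finally show False using p0 e0 by simp
  qed
  define B where "B = (\<Union>pr\<in>{pr \<in> S \<times> S. fst pr \<noteq> snd pr}. {x. poly (p (fst pr) (snd pr)) x = 0})"
  have finB: "finite B" unfolding B_def
  proof (intro finite_UN_I)
    show "finite {pr \<in> S \<times> S. fst pr \<noteq> snd pr}" using finS by simp
  next
    fix pr assume "pr \<in> {pr \<in> S \<times> S. fst pr \<noteq> snd pr}"
    then show "finite {x. poly (p (fst pr) (snd pr)) x = 0}"
      by (intro poly_roots_finite pne) auto
  qed
  have "infinite ({0<..<min \<delta> 1} - B)"
    using finB infinite_Ioo[of 0 "min \<delta> 1"] assms by (simp add: Diff_infinite_finite)
  then obtain lam0 where lam: "lam0 \<in> {0<..<min \<delta> 1}" "lam0 \<notin> B"
    using infinite_imp_nonempty by blast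
  define J' where "J' e = J e + lam0 ^ k e" for e
  have small: "\<bar>J' e - J e\<bar> < \<delta>" for e
  proof -
    have "lam0 ^ k e = lam0 * lam0 ^ h e" unfolding k_def by simp
    also have "\<dots> \<le> lam0" using lam by (simp add: mult_left_le power_le_one)
    finally show ?thesis using lam unfolding J'_def by auto
  qed
  have "J' \<notin> crit S L E"
  proof
    assume "J' \<in> crit S L E"
    then obtain \<eta> \<eta>' where c: "\<eta> \<in> S" "\<eta>' \<in> S" "\<eta> \<noteq> \<eta>'"
      "(\<Sum>e\<in>L. J' e * (\<eta> e - \<eta>' e)) = E \<eta> \<eta>'" unfolding crit_def by blast
    then have "poly (p \<eta> \<eta>') lam0 = 0" unfolding peval J'_def by simp
    then have "lam0 \<in> B" using c unfolding B_def by (intro UN_I[of "(\<eta>, \<eta>')"]) auto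
    then show False using lam by simp
  qed
  then show ?thesis using small by blast
qed

lemma flex_eq: "flex S L E b = G"
  unfolding flex_def
proof (rule the_equality)
  show "cont_R L G \<and> (\<forall>J. J \<notin> crit S L E \<longrightarrow> G J = flex0 S L E J b)"
    using G_cont flex0_eq by simp
next
  fix F assume F: "cont_R L F \<and> (\<forall>J. J \<notin> crit S L E \<longrightarrow> F J = flex0 S L E J b)"
  show "F = G"
  proof
    fix J show "F J = G J"
    proof (rule ccontr)
      assume ne: "F J \<noteq> G J"
      define \<epsilon> where "\<epsilon> = \<bar>F J - G J\<bar> / 2"
      have ep: "\<epsilon> > 0" using ne unfolding \<epsilon>_def by simp
      obtain d1 where d1: "d1 > 0" "\<forall>J'. (\<forall>e\<in>L. \<bar>J' e - J e\<bar> < d1) \<longrightarrow> \<bar>F J' - F J\<bar> < \<epsilon>"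
        using F ep unfolding cont_R_def by blast
      obtain d2 where d2: "d2 > 0" "\<forall>J'. (\<forall>e\<in>L. \<bar>J' e - J e\<bar> < d2) \<longrightarrow> \<bar>G J' - G J\<bar> < \<epsilon>"
        using G_cont ep unfolding cont_R_def by blast
      obtain J' where J': "\<forall>e\<in>L. \<bar>J' e - J e\<bar> < min d1 d2" "J' \<notin> crit S L E"
        using dense[of "min d1 d2" J] d1 d2 by auto
      have "F J' = G J'" using F J'(2) flex0_eq by simp
      moreover have "\<bar>F J' - F J\<bar> < \<epsilon>" "\<bar>G J' - G J\<bar> < \<epsilon>" using d1 d2 J'(1) by auto
      moreover have "\<bar>F J - G J\<bar> = \<bar>(F J - F J') + (G J' - G J)\<bar>"
        by (rule arg_cong[where f=abs]) (use \<open>F J' = G J'\<close> in simp)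
      moreover have "\<bar>(F J - F J') + (G J' - G J)\<bar> \<le> \<bar>F J - F J'\<bar> + \<bar>G J' - G J\<bar>"
        by (rule abs_triangle_ineq)
      moreover have "\<bar>F J - F J'\<bar> = \<bar>F J' - F J\<bar>" by (rule abs_minus_commute)
      ultimately show False unfolding \<epsilon>_def by linarith
    qed
  qed
qed

definition phi :: "real \<Rightarrow> real" where "phi s = sqrt (1 - exp (- 2 * s)) - exp (- s)"

lemma V_curve_cont: "continuous_on A (\<lambda>w. V (curve J J' w) \<eta>)"
  unfolding V_def curve_def by (intro continuous_intros)

lemma argmin_stable:
  assumes uv: "u < v" and nc: "\<forall>s\<in>{u<..<v}. curve J J' s \<notin> crit S L E"
    and s0: "s0 \<in> {u<..<v}" and sg: "sg = 1 \<or> sg = -1" and w: "w \<in> {u..v}"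
  shows "m sg (curve J J' w) = V (curve J J' w) (sigma S L E (curve J J' s0) b sg)"
proof -
  let ?\<sigma> = "sigma S L E (curve J J' s0) b sg"
  have sc: "?\<sigma> \<in> Sc sg" "\<forall>\<eta>\<in>Sc sg. \<eta> \<noteq> ?\<sigma> \<longrightarrow> V (curve J J' s0) ?\<sigma> < V (curve J J' s0) \<eta>"
    using sigma_char[OF _ sg, of "curve J J' s0"] nc s0 by auto
  have ge: "V (curve J J' w) ?\<sigma> \<le> V (curve J J' w) \<eta>" if \<eta>: "\<eta> \<in> Sc sg" for \<eta>
  proof -
    define f where "f x = V (curve J J' x) \<eta> - V (curve J J' x) ?\<sigma>" for x
    have fc: "continuous_on A f" for A unfolding f_def
      by (intro continuous_on_diff V_curve_cont)
    have inside: "0 \<le> f x" if x: "x \<in> {u<..<v}" for x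
    proof (cases "\<eta> = ?\<sigma>")
      case True then show ?thesis unfolding f_def by simp
    next
      case False
      have fs0: "f s0 > 0" using sc \<eta> False unfolding f_def by auto
      have nz: "f y \<noteq> 0" if "y \<in> {u<..<v}" for y
      proof
        assume "f y = 0"
        then have "V (curve J J' y) \<eta> = V (curve J J' y) ?\<sigma>" unfolding f_def by simp
        then have "curve J J' y \<in> crit S L E" using crit_iff \<eta> sc(1) False unfolding Sc_def by blast
        then show False using nc that by blast
      qed
      show ?thesis
      proof (rule ccontr)
        assume neg: "\<not> 0 \<le> f x"
        show False
        proof (cases "x \<le> s0")
          case True
          have "\<exists>y\<ge>x. y \<le> s0 \<and> f y = 0"
            by (rule IVT') (use neg fs0 True fc in auto)
          then obtain y where y: "y \<ge> x" "y \<le> s0" "f y = 0" by blast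
          have "y \<in> {u<..<v}" using y x s0 by simp
          then show False using nz y(3) by blast
        next
          case False
          have "\<exists>y\<ge>s0. y \<le> x \<and> f y = 0"
            by (rule IVT2') (use neg fs0 False fc in auto)
          then obtain y where y: "y \<ge> s0" "y \<le> x" "f y = 0" by blast
          have "y \<in> {u<..<v}" using y x s0 by simp
          then show False using nz y(3) by blast
        qed
      qed
    qed
    have cl: "closure {u<..<v} = {u..v}" by (rule closure_greaterThanLessThan[OF uv])
    have "0 \<le> f w"
    proof (rule continuous_ge_on_closure[of "{u<..<v}" f w 0])
      show "continuous_on (closure {u<..<v}) f" by (rule fc)
      show "w \<in> closure {u<..<v}" using w cl by simp
      show "\<And>x. x \<in> {u<..<v} \<Longrightarrow> 0 \<le> f x" by (rule inside)
    qed
    then show ?thesis unfolding f_def by simp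
  qed
  show ?thesis unfolding m_def
  proof (rule Min_eqI)
    show "finite (V (curve J J' w) ` Sc sg)" using finSc by simp
  next
    fix y assume "y \<in> V (curve J J' w) ` Sc sg"
    then obtain \<eta> where "\<eta> \<in> Sc sg" "y = V (curve J J' w) \<eta>" by blast
    then show "V (curve J J' w) ?\<sigma> \<le> y" using ge by simp
  next
    show "V (curve J J' w) ?\<sigma> \<in> V (curve J J' w) ` Sc sg" using sc(1) by simp
  qed
qed

lemma interval:
  assumes u0: "0 \<le> u" and uv: "u < v" and vt: "v \<le> t"
    and nc: "\<forall>s\<in>{u<..<v}. curve J J' s \<notin> crit S L E"
    and M: "\<forall>e\<in>L. \<bar>J e\<bar> \<le> M \<and> \<bar>J' e\<bar> \<le> M"
    and N: "\<forall>s\<in>{0..t}. curve J J' s \<notin> crit S L E \<longrightarrow> card (droplet_bd S L E (curve J J' s) b) \<le> N"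
  shows "\<bar>G (curve J J' v) - G (curve J J' u)\<bar> \<le> 2 * M * real N * (phi v - phi u)"
proof -
  define s0 where "s0 = (u + v) / 2"
  have s0: "s0 \<in> {u<..<v}" using uv unfolding s0_def by auto
  let ?p = "sigma S L E (curve J J' s0) b 1" and ?q = "sigma S L E (curve J J' s0) b (-1)"
  let ?cu = "curve J J' u" and ?cv = "curve J J' v"
  have pS: "?p \<in> S" and qS: "?q \<in> S"
    using sigma_char[of "curve J J' s0" 1] sigma_char[of "curve J J' s0" "-1"] nc s0
    unfolding Sc_def by auto
  have Gu: "G ?cu = \<bar>V ?cu ?p - V ?cu ?q\<bar>" unfolding G_def
    using argmin_stable[OF uv nc s0, of 1 u] argmin_stable[OF uv nc s0, of "-1" u] uv by simp
  have Gv: "G ?cv = \<bar>V ?cv ?p - V ?cv ?q\<bar>" unfolding G_def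
    using argmin_stable[OF uv nc s0, of 1 v] argmin_stable[OF uv nc s0, of "-1" v] uv by simp
  define Bd where "Bd = droplet_bd S L E (curve J J' s0) b"
  have Bd_eq: "Bd = {e \<in> L. ?p e \<noteq> ?q e}" unfolding Bd_def droplet_bd_def by simp
  have cardB: "card Bd \<le> N" using N s0 nc uv u0 vt unfolding Bd_def by auto
  have diff: "(V ?cv ?p - V ?cv ?q) - (V ?cu ?p - V ?cu ?q)
      = (\<Sum>e\<in>L. (?cu e - ?cv e) * (?p e - ?q e))"
  proof -
    have "(\<Sum>e\<in>L. (?cu e - ?cv e) * (?p e - ?q e)) = (\<Sum>e\<in>L. ?cu e * ?p e) - (\<Sum>e\<in>L. ?cu e * ?q e)
       - (\<Sum>e\<in>L. ?cv e * ?p e) + (\<Sum>e\<in>L. ?cv e * ?q e)"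
      by (simp add: algebra_simps sum.distrib sum_subtractf)
    then show ?thesis unfolding V_def by linarith
  qed
  also have "\<dots> = (\<Sum>e\<in>Bd. (?cu e - ?cv e) * (?p e - ?q e))"
    unfolding Bd_eq by (rule sum.mono_neutral_right) (use finL in auto)
  finally have diff: "(V ?cv ?p - V ?cv ?q) - (V ?cu ?p - V ?cu ?q)
      = (\<Sum>e\<in>Bd. (?cu e - ?cv e) * (?p e - ?q e))" .
  have emono: "exp (- v) \<le> exp (- u)" using uv by simp
  have rmono: "sqrt (1 - exp (- 2 * u)) \<le> sqrt (1 - exp (- 2 * v))" using uv by simp
  have trm: "\<bar>(?cu e - ?cv e) * (?p e - ?q e)\<bar> \<le> 2 * M * (phi v - phi u)" if e: "e \<in> Bd" for e
  proof -
    have eL: "e \<in> L" using e Bd_eq by auto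
    have pq: "\<bar>?p e - ?q e\<bar> \<le> 2" using pm[OF pS eL] pm[OF qS eL] by auto
    have "?cu e - ?cv e = (exp (- u) - exp (- v)) * J e
        + (sqrt (1 - exp (- 2 * u)) - sqrt (1 - exp (- 2 * v))) * J' e"
      unfolding curve_def by (simp add: algebra_simps)
    also have "\<bar>\<dots>\<bar> \<le> \<bar>(exp (- u) - exp (- v)) * J e\<bar>
        + \<bar>(sqrt (1 - exp (- 2 * u)) - sqrt (1 - exp (- 2 * v))) * J' e\<bar>" by (rule abs_triangle_ineq)
    also have "\<dots> = (exp (- u) - exp (- v)) * \<bar>J e\<bar>
        + (sqrt (1 - exp (- 2 * v)) - sqrt (1 - exp (- 2 * u))) * \<bar>J' e\<bar>"
      using emono rmono by (simp add: abs_mult)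
    also have "\<dots> \<le> (exp (- u) - exp (- v)) * M
        + (sqrt (1 - exp (- 2 * v)) - sqrt (1 - exp (- 2 * u))) * M"
      using M eL emono rmono by (intro add_mono mult_left_mono) auto
    also have "\<dots> = M * (phi v - phi u)" unfolding phi_def by (simp add: algebra_simps)
    finally have c: "\<bar>?cu e - ?cv e\<bar> \<le> M * (phi v - phi u)" .
    have "\<bar>(?cu e - ?cv e) * (?p e - ?q e)\<bar> = \<bar>?cu e - ?cv e\<bar> * \<bar>?p e - ?q e\<bar>" by (simp add: abs_mult)
    also have "\<dots> \<le> (M * (phi v - phi u)) * 2"
      using c pq by (intro mult_mono) auto
    finally show ?thesis by simp
  qed
  have Mnn: "0 \<le> M * (phi v - phi u)"
  proof -
    have "0 \<le> \<bar>J b\<bar>" by simp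
    obtain \<eta> where "\<eta> \<in> S" "\<eta> b = 1" using exP by blast
    then have "b \<in> L" using zero_off by fastforce
    then have "\<bar>J b\<bar> \<le> M" using M by blast
    then have "0 \<le> M" by simp
    moreover have "phi u \<le> phi v" unfolding phi_def using emono rmono by linarith
    ultimately show ?thesis by simp
  qed
  have "\<bar>G ?cv - G ?cu\<bar> \<le> \<bar>(V ?cv ?p - V ?cv ?q) - (V ?cu ?p - V ?cu ?q)\<bar>"
    unfolding Gu Gv by (rule abs_triangle_ineq3)
  also have "\<dots> \<le> (\<Sum>e\<in>Bd. \<bar>(?cu e - ?cv e) * (?p e - ?q e)\<bar>)" unfolding diff by (rule sum_abs)
  also have "\<dots> \<le> (\<Sum>e\<in>Bd. 2 * M * (phi v - phi u))" by (rule sum_mono) (rule trm)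
  also have "\<dots> = real (card Bd) * (2 * M * (phi v - phi u))" by simp
  also have "\<dots> \<le> real N * (2 * M * (phi v - phi u))"
    using cardB Mnn by (intro mult_right_mono) auto
  finally show ?thesis by (simp add: algebra_simps)
qed

lemma crit_times_finite:
  assumes ne: "{s \<in> {0..t}. curve J J' s \<notin> crit S L E} \<noteq> {}"
  shows "finite {s \<in> {0..t}. curve J J' s \<in> crit S L E}"
proof -
  define Z where "Z \<eta> \<eta>' = {s \<in> {0..t}. (\<Sum>e\<in>L. curve J J' s e * (\<eta> e - \<eta>' e)) = E \<eta> \<eta>'}" for \<eta> \<eta>'
  have sub: "{s \<in> {0..t}. curve J J' s \<in> crit S L E}
      \<subseteq> (\<Union>pr\<in>{pr \<in> S \<times> S. fst pr \<noteq> snd pr}. Z (fst pr) (snd pr))"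
  proof
    fix s assume "s \<in> {s \<in> {0..t}. curve J J' s \<in> crit S L E}"
    then obtain \<eta> \<eta>' where "s \<in> {0..t}" "\<eta> \<in> S" "\<eta>' \<in> S" "\<eta> \<noteq> \<eta>'"
      "(\<Sum>e\<in>L. curve J J' s e * (\<eta> e - \<eta>' e)) = E \<eta> \<eta>'" unfolding crit_def by blast
    then show "s \<in> (\<Union>pr\<in>{pr \<in> S \<times> S. fst pr \<noteq> snd pr}. Z (fst pr) (snd pr))"
      unfolding Z_def by (intro UN_I[of "(\<eta>, \<eta>')"]) auto
  qed
  have finZ: "finite (Z \<eta> \<eta>')" if hh: "\<eta> \<in> S" "\<eta>' \<in> S" "\<eta> \<noteq> \<eta>'" for \<eta> \<eta>'
  proof -
    define A where "A = (\<Sum>e\<in>L. J e * (\<eta> e - \<eta>' e))"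
    define B where "B = (\<Sum>e\<in>L. J' e * (\<eta> e - \<eta>' e))"
    define C where "C = E \<eta> \<eta>'"
    have sumeq: "(\<Sum>e\<in>L. curve J J' s e * (\<eta> e - \<eta>' e)) = exp (- s) * A + sqrt (1 - exp (- 2 * s)) * B" for s
    proof -
      have "(\<Sum>e\<in>L. curve J J' s e * (\<eta> e - \<eta>' e)) = (\<Sum>e\<in>L. exp (- s) * (J e * (\<eta> e - \<eta>' e))
          + sqrt (1 - exp (- 2 * s)) * (J' e * (\<eta> e - \<eta>' e)))"
        by (rule sum.cong) (simp_all add: curve_def algebra_simps)
      also have "\<dots> = exp (- s) * A + sqrt (1 - exp (- 2 * s)) * B"
        by (simp add: sum.distrib sum_distrib_left A_def B_def)
      finally show ?thesis .
    qed
    have notall: "\<not> (A = 0 \<and> B = 0 \<and> C = 0)"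
    proof
      assume "A = 0 \<and> B = 0 \<and> C = 0"
      then have "curve J J' s \<in> crit S L E" for s
      proof -
        have "(\<Sum>e\<in>L. curve J J' s e * (\<eta> e - \<eta>' e)) = E \<eta> \<eta>'"
          using sumeq[of s] \<open>A = 0 \<and> B = 0 \<and> C = 0\<close> unfolding C_def by simp
        then show ?thesis unfolding crit_def using hh by blast
      qed
      then show False using ne by auto
    qed
    define q where "q = [:C^2 - B^2, - 2 * A * C, A^2 + B^2:]"
    have qne: "q \<noteq> 0"
    proof
      assume "q = 0"
      then have "C^2 - B^2 = 0" "A * C = 0" "A^2 + B^2 = 0" unfolding q_def by auto
      moreover have "A^2 \<ge> 0" "B^2 \<ge> 0" by auto
      ultimately have "A = 0" "B = 0" by (auto simp: add_nonneg_eq_0_iff)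
      then have "C = 0" using \<open>C^2 - B^2 = 0\<close> by simp
      then show False using notall \<open>A = 0\<close> \<open>B = 0\<close> by simp
    qed
    have "Z \<eta> \<eta>' \<subseteq> (\<lambda>s. exp (- s)) -` {x. poly q x = 0}"
    proof
      fix s assume "s \<in> Z \<eta> \<eta>'"
      then have s: "0 \<le> s" "exp (- s) * A + sqrt (1 - exp (- 2 * s)) * B = C"
        unfolding Z_def C_def sumeq by auto
      define x where "x = exp (- s)"
      have e2: "exp (- 2 * s) = x^2" unfolding x_def by (simp add: power2_eq_square flip: exp_add)
      have x1: "x \<le> 1" unfolding x_def using s(1) by simp
      have x0: "x \<ge> 0" unfolding x_def by simp
      have "x^2 \<le> 1" using x1 x0 by (simp add: power_le_one)
      then have r2: "(sqrt (1 - exp (- 2 * s)))^2 = 1 - x^2" unfolding e2 by simp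
      have "sqrt (1 - exp (- 2 * s)) * B = C - A * x" using s(2) unfolding x_def by (simp add: algebra_simps)
      then have "(sqrt (1 - exp (- 2 * s)) * B)^2 = (C - A * x)^2" by simp
      then have "(sqrt (1 - exp (- 2 * s)))^2 * B^2 = (C - A * x)^2" by (simp only: power_mult_distrib)
      then have "(1 - x^2) * B^2 = (C - A * x)^2" by (simp only: r2)
      then have "poly q x = 0" unfolding q_def by (simp add: algebra_simps power2_eq_square)
      then show "s \<in> (\<lambda>s. exp (- s)) -` {x. poly q x = 0}" unfolding x_def by simp
    qed
    moreover have "finite ((\<lambda>s::real. exp (- s)) -` {x. poly q x = 0})"
      by (rule finite_vimageI) (use poly_roots_finite[OF qne] in \<open>auto simp: inj_on_def\<close>)
    ultimately show ?thesis by (rule finite_subset)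
  qed
  have "finite (\<Union>pr\<in>{pr \<in> S \<times> S. fst pr \<noteq> snd pr}. Z (fst pr) (snd pr))"
  proof (intro finite_UN_I)
    show "finite {pr \<in> S \<times> S. fst pr \<noteq> snd pr}" using finS by simp
  next
    fix pr assume "pr \<in> {pr \<in> S \<times> S. fst pr \<noteq> snd pr}"
    then show "finite (Z (fst pr) (snd pr))" by (intro finZ) auto
  qed
  then show ?thesis using sub by (rule finite_subset[rotated])
qed

lemma telescope:
  assumes Zfin: "finite {s \<in> {0..t}. curve J J' s \<in> crit S L E}"
    and M: "\<forall>e\<in>L. \<bar>J e\<bar> \<le> M \<and> \<bar>J' e\<bar> \<le> M"
    and N: "\<forall>s\<in>{0..t}. curve J J' s \<notin> crit S L E \<longrightarrow> card (droplet_bd S L E (curve J J' s) b) \<le> N"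
  shows "0 \<le> u \<Longrightarrow> u \<le> v \<Longrightarrow> v \<le> t \<Longrightarrow>
    \<bar>G (curve J J' v) - G (curve J J' u)\<bar> \<le> 2 * M * real N * (phi v - phi u)"
proof (induction "card ({s \<in> {0..t}. curve J J' s \<in> crit S L E} \<inter> {u<..<v})" arbitrary: u v rule: less_induct)
  case less
  let ?Z = "{s \<in> {0..t}. curve J J' s \<in> crit S L E}"
  show ?case
  proof (cases "u = v")
    case True then show ?thesis by simp
  next
    case False
    then have uv: "u < v" using less.prems by simp
    show ?thesis
    proof (cases "?Z \<inter> {u<..<v} = {}")
      case True
      have "\<forall>s\<in>{u<..<v}. curve J J' s \<notin> crit S L E"
      proof
        fix s assume s: "s \<in> {u<..<v}"
        show "curve J J' s \<notin> crit S L E"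
        proof
          assume "curve J J' s \<in> crit S L E"
          then have "s \<in> ?Z \<inter> {u<..<v}" using s less.prems by auto
          then show False using True by blast
        qed
      qed
      then show ?thesis using interval[OF less.prems(1) uv less.prems(3) _ M N] by blast
    next
      case False
      then obtain c where c: "c \<in> ?Z" "c \<in> {u<..<v}" by blast
      have f: "finite (?Z \<inter> {u<..<v})" using Zfin by simp
      have l1: "card (?Z \<inter> {u<..<c}) < card (?Z \<inter> {u<..<v})"
        by (rule psubset_card_mono[OF f]) (use c in auto)
      have l2: "card (?Z \<inter> {c<..<v}) < card (?Z \<inter> {u<..<v})"
        by (rule psubset_card_mono[OF f]) (use c in auto)
      have h1: "\<bar>G (curve J J' c) - G (curve J J' u)\<bar> \<le> 2 * M * real N * (phi c - phi u)"
        using less.hyps[OF l1] less.prems c by auto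
      have h2: "\<bar>G (curve J J' v) - G (curve J J' c)\<bar> \<le> 2 * M * real N * (phi v - phi c)"
        using less.hyps[OF l2] less.prems c by auto
      have "\<bar>G (curve J J' v) - G (curve J J' u)\<bar>
         \<le> \<bar>G (curve J J' c) - G (curve J J' u)\<bar> + \<bar>G (curve J J' v) - G (curve J J' c)\<bar>"
        by (rule order_trans[OF _ abs_triangle_ineq]) simp
      then show ?thesis using h1 h2 by (simp add: algebra_simps)
    qed
  qed
qed

end

lemma edge_struct:
  assumes "e \<in> nn_edges W"
  shows "\<exists>x y. e = {x, y} \<and> x \<in> W \<and> y \<in> W \<and> x \<noteq> y"
  using assms unfolding nn_edges_def by fastforce

lemma finite_box: "finite (box (a :: int ^ 'd) c)"
proof -
  have "box a c \<subseteq> (\<lambda>f. \<chi> i. f i) ` (PiE UNIV (\<lambda>i. {a$i..c$i}))"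
  proof
    fix x assume "x \<in> box a c"
    then show "x \<in> (\<lambda>f. \<chi> i. f i) ` (PiE UNIV (\<lambda>i. {a$i..c$i}))"
      by (intro image_eqI[where x="\<lambda>i. x$i"]) (auto simp: box_def PiE_def extensional_def Pi_def vec_eq_iff)
  qed
  moreover have "finite (PiE (UNIV :: 'd set) (\<lambda>i. {a$i..c$i}))" by (intro finite_PiE) auto
  ultimately show ?thesis by (meson finite_imageI finite_subset)
qed

lemma sqrt_bound:
  assumes "0 \<le> t" "t \<le> 1"
  shows "sqrt (1 - exp (- 2 * t)) - exp (- t) + 1 \<le> 3 * sqrt t"
proof -
  have a: "1 - exp (- t) \<le> t" using exp_ge_add_one_self[of "- t"] by simp
  have "t * t \<le> t * 1" using assms by (intro mult_left_mono) auto
  then have tt: "t^2 \<le> t" by (simp add: power2_eq_square)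
  have "sqrt (t^2) \<le> sqrt t" using tt by (rule real_sqrt_le_mono)
  moreover have "sqrt (t^2) = t" using assms by simp
  ultimately have b: "t \<le> sqrt t" by simp
  have c: "1 - exp (- 2 * t) \<le> 4 * t" using exp_ge_add_one_self[of "- 2 * t"] assms by simp
  have "sqrt (1 - exp (- 2 * t)) \<le> sqrt (4 * t)" using c by simp
  also have "\<dots> = 2 * sqrt t" by (simp add: real_sqrt_mult)
  finally show ?thesis using a b by linarith
qed

theorem proposition2p10:
  fixes a c :: "int ^ 'd"
    and E :: "((int ^ 'd) set \<Rightarrow> real) \<Rightarrow> ((int ^ 'd) set \<Rightarrow> real) \<Rightarrow> real"
    and b :: "(int ^ 'd) set"
    and J J' :: "(int ^ 'd) set \<Rightarrow> real"
    and t :: real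
  defines "L \<equiv> nn_edges (box a c)"
  defines "S \<equiv> configs (box a c) L"
  assumes E_refl: "\<forall>eta\<in>S. E eta eta = 0"
    and E_cocycle: "\<forall>eta\<in>S. \<forall>eta'\<in>S. \<forall>eta''\<in>S. E eta eta'' = E eta eta' + E eta' eta''"
    and b_edge: "b \<in> L"
    and t_range: "0 \<le> t" "t \<le> 1"
    and max_defined: "{s \<in> {0..t}. curve J J' s \<notin> crit S L E} \<noteq> {}"
  shows "\<bar>flex S L E b (curve J J' t) - flex S L E b (curve J J' 0)\<bar>
           \<le> 6 * sqrt t * Max ((\<lambda>e. max \<bar>J e\<bar> \<bar>J' e\<bar>) ` L)
               * real (Max ((\<lambda>s. card (droplet_bd S L E (curve J J' s) b))
                             ` {s \<in> {0..t}. curve J J' s \<notin> crit S L E}))"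
proof -
  have edge: "\<exists>x y. e = {x, y} \<and> x \<in> box a c \<and> y \<in> box a c \<and> x \<noteq> y" if "e \<in> L" for e
    using edge_struct that unfolding L_def by blast
  have finL: "finite L"
  proof -
    have "L \<subseteq> Pow (box a c)" using edge by blast
    then show ?thesis using finite_box[of a c] by (meson finite_Pow_iff finite_subset)
  qed
  have zero_off: "\<eta> e = 0" if "\<eta> \<in> S" "e \<notin> L" for \<eta> e
    using that unfolding S_def configs_def edge_cfg_def by auto
  have pm: "\<eta> e = 1 \<or> \<eta> e = -1" if h: "\<eta> \<in> S" "e \<in> L" for \<eta> e
  proof -
    obtain eta where eta: "\<eta> = edge_cfg L eta" "\<forall>x\<in>box a c. eta x = 1 \<or> eta x = -1"
      using h(1) unfolding S_def configs_def by blast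
    obtain x y where xy: "e = {x, y}" "x \<in> box a c" "y \<in> box a c" "x \<noteq> y" using edge[OF h(2)] by blast
    have "\<eta> e = edge_cfg L eta e" using eta(1) by simp
    also have "\<dots> = prod eta e" using h(2) by (simp add: edge_cfg_def)
    also have "\<dots> = eta x * eta y" using xy(1,4) by simp
    finally have ee: "\<eta> e = eta x * eta y" .
    have "eta x = 1 \<or> eta x = -1" "eta y = 1 \<or> eta y = -1" using eta(2) xy(2,3) by auto
    then show ?thesis using ee by auto
  qed
  have finS: "finite S"
  proof -
    have "S \<subseteq> {f. \<forall>x. (x \<in> L \<longrightarrow> f x \<in> {-1, 1}) \<and> (x \<notin> L \<longrightarrow> f x = 0)}"
      using pm zero_off by blast
    then show ?thesis using finite_set_of_finite_funs[OF finL, of "{-1, 1::real}" 0] finite_subset by blast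
  qed
  obtain x y where xy: "b = {x, y}" "x \<in> box a c" "y \<in> box a c" "x \<noteq> y" using edge[OF b_edge] by blast
  have exP: "\<exists>\<eta>\<in>S. \<eta> b = 1"
  proof
    show "edge_cfg L (\<lambda>_. 1) \<in> S" unfolding S_def configs_def by auto
    show "edge_cfg L (\<lambda>_. 1) b = 1" unfolding edge_cfg_def using b_edge by (simp only: if_True prod.neutral_const)
  qed
  have exM: "\<exists>\<eta>\<in>S. \<eta> b = -1"
  proof
    show "edge_cfg L (\<lambda>z. if z = x then -1 else 1) \<in> S" unfolding S_def configs_def
      by (intro CollectI exI[of _ "\<lambda>z. if z = x then -1 else 1"]) auto
    have "edge_cfg L (\<lambda>z. if z = x then -1 else 1) b = prod (\<lambda>z. if z = x then -1 else 1) b"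
      unfolding edge_cfg_def using b_edge by (simp only: if_True)
    also have "\<dots> = (-1::real)" using xy(1,4) by simp
    finally show "edge_cfg L (\<lambda>z. if z = x then -1 else 1) b = -1" .
  qed
  interpret setting S L E b
  proof (rule setting.intro)
    show "finite L" by (rule finL)
    show "finite S" by (rule finS)
    show "\<And>\<eta> e. \<eta> \<in> S \<Longrightarrow> e \<notin> L \<Longrightarrow> \<eta> e = 0" by (rule zero_off)
    show "\<And>\<eta> e. \<eta> \<in> S \<Longrightarrow> e \<in> L \<Longrightarrow> \<eta> e = 1 \<or> \<eta> e = -1" by (rule pm)
    show "\<forall>eta\<in>S. E eta eta = 0" by (rule E_refl)
    show "\<forall>eta\<in>S. \<forall>eta'\<in>S. \<forall>eta''\<in>S. E eta eta'' = E eta eta' + E eta' eta''" by (rule E_cocycle)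
    show "\<exists>\<eta>\<in>S. \<eta> b = 1" by (rule exP)
    show "\<exists>\<eta>\<in>S. \<eta> b = -1" by (rule exM)
  qed
  define M where "M = Max ((\<lambda>e. max \<bar>J e\<bar> \<bar>J' e\<bar>) ` L)"
  define NC where "NC = {s \<in> {0..t}. curve J J' s \<notin> crit S L E}"
  define N where "N = Max ((\<lambda>s. card (droplet_bd S L E (curve J J' s) b)) ` NC)"
  have Mb: "\<forall>e\<in>L. \<bar>J e\<bar> \<le> M \<and> \<bar>J' e\<bar> \<le> M"
  proof
    fix e assume "e \<in> L"
    then have "max \<bar>J e\<bar> \<bar>J' e\<bar> \<le> M" unfolding M_def using finL by (intro Max_ge) auto
    then show "\<bar>J e\<bar> \<le> M \<and> \<bar>J' e\<bar> \<le> M" by simp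
  qed
  have M0: "0 \<le> M" using Mb b_edge by force
  have finimg: "finite ((\<lambda>s. card (droplet_bd S L E (curve J J' s) b)) ` NC)"
  proof (rule finite_subset)
    show "(\<lambda>s. card (droplet_bd S L E (curve J J' s) b)) ` NC \<subseteq> {0..card L}"
      using finL by (auto simp: droplet_bd_def intro!: card_mono)
  qed simp
  have Nb: "\<forall>s\<in>{0..t}. curve J J' s \<notin> crit S L E \<longrightarrow> card (droplet_bd S L E (curve J J' s) b) \<le> N"
    unfolding N_def using finimg unfolding NC_def by (auto intro!: Max_ge)
  have Zfin: "finite {s \<in> {0..t}. curve J J' s \<in> crit S L E}"
    by (rule crit_times_finite[OF max_defined])
  have main: "\<bar>G (curve J J' t) - G (curve J J' 0)\<bar> \<le> 2 * M * real N * (phi t - phi 0)"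
    by (rule telescope[OF Zfin Mb Nb]) (use t_range in auto)
  have "phi t - phi 0 = sqrt (1 - exp (- 2 * t)) - exp (- t) + 1" unfolding phi_def by simp
  also have "\<dots> \<le> 3 * sqrt t" by (rule sqrt_bound[OF t_range])
  finally have "2 * M * real N * (phi t - phi 0) \<le> 2 * M * real N * (3 * sqrt t)"
    using M0 by (intro mult_left_mono) auto
  then have "\<bar>G (curve J J' t) - G (curve J J' 0)\<bar> \<le> 6 * sqrt t * M * real N"
    using main by (simp add: algebra_simps)
  then show ?thesis unfolding flex_eq M_def N_def NC_def .
qed

end
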